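(* Let $X=\{x_1,\dots,x_S\}\subset\mathbb{R}^A$ be finite and $K\ge1$. The reduced-space branch and bound algorithm for the $K$-center problem described in the context terminates after finitely many steps.
   Context: The $K$-center problem is $z=\min_{\mu^1,\dots,\mu^K\in X}\max_s\min_k\|x_s-\mu^k\|_2^2$. Root region: the box $M_0=M_0^1\times\cdots\times M_0^K$, $M_0^k=\{\mu^k:\min_s x_{s,a}\le\mu^k_a\le\max_s x_{s,a}\ \forall a\}$. Nodes are boxes $M=M^1\times\cdots\times M^K$. Lower bound $\beta(M)=\max_s\min_k\min_{\mu^k\in M^k}\|x_s-\mu^k\|_2^2$; upper bound $\alpha(M)$ is the objective value at a feasible $\hat\mu\in X\cap M$. Algorithm: maintain a list of nodes, initially $\{M_0\}$; repeatedly remove a node with least lower bound, tighten it (shrinking boxes without excluding optimal solutions, including replacing each $M^k$ by the smallest box containing $X\cap M^k$); if $|X\cap M^k|>1$ for some $k$, bisect at its midpoint the coordinate $\mu^k_a$ of largest range, keeping a child only if each of its $K$ boxes contains a sample; update the best lower bound $\beta_i$ (minimum of $\beta$ over the list) and best upper bound $\alpha_i$; delete nodes with $\beta(M')\ge\alpha_i$; stop if $\alpha_i-\beta_i\le\epsilon$ (tolerance $\epsilon\ge0$) or the list is empty. *)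

theory Defs
  imports "HOL-Analysis.Analysis" "HOL-Library.Extended_Real"
begin

text \<open>Data: a finite sample set X of points in R^A (A = CARD('a)), K clusters indexed 0..K-1.
  A node is a K-tuple of boxes; box k is given by its lower and upper corner.
  Only the components k < K of a node are meaningful.\<close>

type_synonym 'a node = "nat \<Rightarrow> ((real^'a) \<times> (real^'a))"

definition box_of :: "(real^'a) \<times> (real^'a) \<Rightarrow> (real^'a) set" where
  "box_of b = {\<mu>. \<forall>i. fst b $ i \<le> \<mu> $ i \<and> \<mu> $ i \<le> snd b $ i}"

definition bbox :: "(real^'a) set \<Rightarrow> (real^'a) \<times> (real^'a)" where
  "bbox S = ((\<chi> i. Min ((\<lambda>x. x $ i) ` S)), (\<chi> i. Max ((\<lambda>x. x $ i) ` S)))"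

definition vec_upd :: "real^'a \<Rightarrow> 'a \<Rightarrow> real \<Rightarrow> real^'a" where
  "vec_upd v a m = (\<chi> i. if i = a then m else v $ i)"

definition kc_obj :: "(real^'a) set \<Rightarrow> nat \<Rightarrow> (nat \<Rightarrow> real^'a) \<Rightarrow> real" where
  "kc_obj X K \<mu> = Max ((\<lambda>x. Min ((\<lambda>k. (norm (x - \<mu> k))\<^sup>2) ` {..<K})) ` X)"

definition kc_feasible :: "(real^'a) set \<Rightarrow> nat \<Rightarrow> (nat \<Rightarrow> real^'a) \<Rightarrow> bool" where
  "kc_feasible X K \<mu> \<longleftrightarrow> (\<forall>k<K. \<mu> k \<in> X)"

definition kc_optimal :: "(real^'a) set \<Rightarrow> nat \<Rightarrow> (nat \<Rightarrow> real^'a) \<Rightarrow> bool" where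
  "kc_optimal X K \<mu> \<longleftrightarrow> kc_feasible X K \<mu> \<and>
     (\<forall>\<nu>. kc_feasible X K \<nu> \<longrightarrow> kc_obj X K \<mu> \<le> kc_obj X K \<nu>)"

definition in_node :: "nat \<Rightarrow> ('a::finite) node \<Rightarrow> (nat \<Rightarrow> real^'a) \<Rightarrow> bool" where
  "in_node K M \<mu> \<longleftrightarrow> (\<forall>k<K. \<mu> k \<in> box_of (M k))"

definition lower_bound :: "(real^'a) set \<Rightarrow> nat \<Rightarrow> ('a::finite) node \<Rightarrow> real" where
  "lower_bound X K M = Max ((\<lambda>x. Min ((\<lambda>k. INF \<mu>\<in>box_of (M k). (norm (x - \<mu>))\<^sup>2) ` {..<K})) ` X)"

definition root_node :: "(real^'a) set \<Rightarrow> ('a::finite) node" where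
  "root_node X = (\<lambda>k. bbox X)"

definition box_range :: "('a::finite) node \<Rightarrow> nat \<Rightarrow> 'a \<Rightarrow> real" where
  "box_range M k a = snd (M k) $ a - fst (M k) $ a"

text \<open>The result is None
  if some box no longer contains a sample (the node is discarded).\<close>
definition tighten_ok :: "(real^'a) set \<Rightarrow> nat \<Rightarrow> ('a::finite) node \<Rightarrow> ('a::finite) node option \<Rightarrow> bool" where
  "tighten_ok X K M T \<longleftrightarrow> (\<exists>M''.
      (\<forall>k<K. box_of (M'' k) \<subseteq> box_of (M k)) \<and>
      (\<forall>\<mu>. kc_optimal X K \<mu> \<and> in_node K M \<mu> \<longrightarrow> in_node K M'' \<mu>) \<and>
      T = (if \<forall>k<K. X \<inter> box_of (M'' k) \<noteq> {}
           then Some (\<lambda>k. bbox (X \<inter> box_of (M'' k))) else None))"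

definition bisect_children :: "(real^'a) set \<Rightarrow> nat \<Rightarrow> ('a::finite) node \<Rightarrow> nat \<Rightarrow> 'a \<Rightarrow> ('a::finite) node set" where
  "bisect_children X K M k a =
     (let m = (fst (M k) $ a + snd (M k) $ a) / 2 in
      {N \<in> {M(k := (fst (M k), vec_upd (snd (M k)) a m)),
             M(k := (vec_upd (fst (M k)) a m, snd (M k)))}.
         \<forall>k'<K. X \<inter> box_of (N k') \<noteq> {}})"

text \<open>State: (list of nodes, best upper bound).\<close>
definition bb_step :: "(real^'a) set \<Rightarrow> nat \<Rightarrow> real \<Rightarrow>
    (('a::finite) node set \<times> ereal) \<Rightarrow> (('a::finite) node set \<times> ereal) \<Rightarrow> bool" where
  "bb_step X K \<epsilon> s s' \<longleftrightarrow> (case s of (L, \<alpha>) \<Rightarrow> case s' of (L', \<alpha>') \<Rightarrow>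
     L \<noteq> {} \<and> \<not> (\<alpha> - ereal (Min (lower_bound X K ` L)) \<le> ereal \<epsilon>) \<and>
     (\<exists>M\<in>L. (\<forall>N\<in>L. lower_bound X K M \<le> lower_bound X K N) \<and>
        ((tighten_ok X K M None \<and> \<alpha>' = \<alpha> \<and>
            L' = {N \<in> L - {M}. ereal (lower_bound X K N) < \<alpha>'})
         \<or>
         (\<exists>M' F C. tighten_ok X K M (Some M') \<and>
            finite F \<and> (\<forall>\<mu>\<in>F. kc_feasible X K \<mu> \<and> in_node K M' \<mu>) \<and>
            \<alpha>' = Min (insert \<alpha> ((\<lambda>\<mu>. ereal (kc_obj X K \<mu>)) ` F)) \<and>
            ((\<exists>k<K. card (X \<inter> box_of (M' k)) > 1) \<longrightarrow>
               (\<exists>k a. k < K \<and> (\<forall>k'<K. \<forall>a'. box_range M' k' a' \<le> box_range M' k a) \<and>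
                  C = bisect_children X K M' k a)) \<and>
            (\<not> (\<exists>k<K. card (X \<inter> box_of (M' k)) > 1) \<longrightarrow> C = {}) \<and>
            L' = {N \<in> (L - {M}) \<union> C. ereal (lower_bound X K N) < \<alpha>'}))))"

end

theory Submission
  imports Defs
begin

lemma in_bbox: "finite S \<Longrightarrow> x \<in> S \<Longrightarrow> x \<in> box_of (bbox S)"
  by (auto simp: box_of_def bbox_def intro!: Min_le Max_ge)

lemma bbox_sub:
  assumes "finite S" "S \<noteq> {}" "S \<subseteq> box_of b"
  shows "box_of (bbox S) \<subseteq> box_of b"
proof
  fix \<mu> assume m: "\<mu> \<in> box_of (bbox S)"
  show "\<mu> \<in> box_of b" unfolding box_of_def
  proof (intro CollectI allI conjI)
    fix i
    have "fst b $ i \<le> Min ((\<lambda>x. x $ i) ` S)"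
      using assms by (auto simp: box_of_def intro!: Min.boundedI)
    also have "\<dots> \<le> \<mu> $ i" using m by (simp add: box_of_def bbox_def)
    finally show "fst b $ i \<le> \<mu> $ i" .
    have "\<mu> $ i \<le> Max ((\<lambda>x. x $ i) ` S)" using m by (simp add: box_of_def bbox_def)
    also have "\<dots> \<le> snd b $ i"
      using assms by (auto simp: box_of_def intro!: Max.boundedI)
    finally show "\<mu> $ i \<le> snd b $ i" .
  qed
qed

lemma box_mono: "(\<And>i. fst b $ i \<le> fst b' $ i \<and> snd b' $ i \<le> snd b $ i) \<Longrightarrow> box_of b' \<subseteq> box_of b"
  unfolding box_of_def by (auto intro: order_trans)

definition mu :: "(real^'a) set \<Rightarrow> nat \<Rightarrow> ('a::finite) node \<Rightarrow> nat" where
  "mu X K N = (\<Sum>k<K. card (X \<inter> box_of (N k)))"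

definition phi :: "(real^'a) set \<Rightarrow> nat \<Rightarrow> ('a::finite) node set \<Rightarrow> nat" where
  "phi X K L = (\<Sum>N\<in>L. (3::nat) ^ (mu X K N))"

lemma tighten_some:
  assumes "tighten_ok X K M (Some M')"
  shows "\<exists>S. \<forall>k<K. S k \<noteq> {} \<and> S k \<subseteq> X \<inter> box_of (M k) \<and> M' k = bbox (S k)"
proof -
  obtain M'' where h: "\<forall>k<K. box_of (M'' k) \<subseteq> box_of (M k)"
    "Some M' = (if \<forall>k<K. X \<inter> box_of (M'' k) \<noteq> {}
           then Some (\<lambda>k. bbox (X \<inter> box_of (M'' k))) else None)"
    using assms unfolding tighten_ok_def by blast
  then have "\<forall>k<K. X \<inter> box_of (M'' k) \<noteq> {}" "M' = (\<lambda>k. bbox (X \<inter> box_of (M'' k)))"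
    by (auto split: if_splits)
  then show ?thesis using h(1) by (intro exI[of _ "\<lambda>k. X \<inter> box_of (M'' k)"]) auto
qed

lemma tighten_mu:
  assumes "tighten_ok X K M (Some M')" "finite X"
  shows "mu X K M' \<le> mu X K M"
    and "\<forall>k<K. \<exists>T. T \<noteq> {} \<and> T \<subseteq> X \<and> M' k = bbox T"
proof -
  obtain S where S: "\<forall>k<K. S k \<noteq> {} \<and> S k \<subseteq> X \<inter> box_of (M k) \<and> M' k = bbox (S k)"
    using tighten_some[OF assms(1)] by blast
  have "card (X \<inter> box_of (M' k)) \<le> card (X \<inter> box_of (M k))" if k: "k < K" for k
  proof -
    have Sk: "S k \<noteq> {}" "S k \<subseteq> X \<inter> box_of (M k)" "M' k = bbox (S k)" using S k by blast+
    have fin: "finite (S k)" using Sk(2) assms(2) finite_subset by blast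
    have Sb: "S k \<subseteq> box_of (M k)" using Sk(2) by blast
    have "box_of (M' k) \<subseteq> box_of (M k)"
      unfolding Sk(3) by (rule bbox_sub[OF fin Sk(1) Sb])
    then have "X \<inter> box_of (M' k) \<subseteq> X \<inter> box_of (M k)" by blast
    then show ?thesis by (rule card_mono[rotated]) (simp add: assms(2))
  qed
  then show "mu X K M' \<le> mu X K M" unfolding mu_def by (rule sum_mono) simp
  show "\<forall>k<K. \<exists>T. T \<noteq> {} \<and> T \<subseteq> X \<and> M' k = bbox T"
  proof (intro allI impI)
    fix k assume k: "k < K"
    have Sk: "S k \<noteq> {}" "S k \<subseteq> X \<inter> box_of (M k)" "M' k = bbox (S k)" using S k by blast+
    have "S k \<subseteq> X" using Sk(2) by blast
    then show "\<exists>T. T \<noteq> {} \<and> T \<subseteq> X \<and> M' k = bbox T" using Sk(1,3) by (intro exI[of _ "S k"]) simp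
  qed
qed

lemma range_pos:
  assumes "card (X \<inter> box_of (M' k)) > 1"
  shows "\<exists>a. box_range M' k a > 0"
proof -
  let ?A = "X \<inter> box_of (M' k)"
  have "?A \<noteq> {}"
  proof
    assume "?A = {}"
    then show False using assms by simp
  qed
  then obtain x where x: "x \<in> ?A" by blast
  have "\<not> ?A \<subseteq> {x}"
  proof
    assume "?A \<subseteq> {x}"
    then have "card ?A \<le> card {x}" by (rule card_mono[rotated]) simp
    then show False using assms by simp
  qed
  then obtain y where y: "y \<in> ?A" "y \<noteq> x" by blast
  have "\<exists>i. x $ i \<noteq> y $ i" using y(2) by (simp add: vec_eq_iff) metis
  then obtain i where i: "x $ i \<noteq> y $ i" by blast
  have "fst (M' k) $ i \<le> x $ i" "x $ i \<le> snd (M' k) $ i"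
       "fst (M' k) $ i \<le> y $ i" "y $ i \<le> snd (M' k) $ i"
  proof -
    have "x \<in> box_of (M' k)" "y \<in> box_of (M' k)" using x y(1) by blast+
    then show "fst (M' k) $ i \<le> x $ i" "x $ i \<le> snd (M' k) $ i"
       "fst (M' k) $ i \<le> y $ i" "y $ i \<le> snd (M' k) $ i" unfolding box_of_def by blast+
  qed
  then have "box_range M' k i > 0" using i unfolding box_range_def by linarith
  then show ?thesis by blast
qed

lemma child_mu:
  fixes M' :: "('a::finite) node"
  assumes "k < K" "box_range M' k a > 0" "M' k = bbox T" "finite T" "T \<noteq> {}" "T \<subseteq> X"
    "finite X" "N \<in> bisect_children X K M' k a"
  shows "mu X K N < mu X K M'"
proof -
  define lo where "lo = fst (M' k)"
  define hi where "hi = snd (M' k)"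
  define m where "m = (lo $ a + hi $ a) / 2"
  have pos: "lo $ a < hi $ a" using assms(2) by (simp add: box_range_def lo_def hi_def)
  have Tb: "T \<subseteq> box_of (M' k)" using in_bbox[OF assms(4)] assms(3) by auto
  have Nc: "N = M'(k := (lo, vec_upd hi a m)) \<or> N = M'(k := (vec_upd lo a m, hi))"
    using assms(8) unfolding bisect_children_def Let_def lo_def hi_def m_def by auto
  have strict: "X \<inter> box_of (N k) \<subset> X \<inter> box_of (M' k)"
  proof (cases "N = M'(k := (lo, vec_upd hi a m))")
    case True
    have "hi $ a \<in> (\<lambda>x. x $ a) ` T" unfolding hi_def assms(3) bbox_def
      using assms(4,5) by simp
    then obtain q where q: "q \<in> T" "q $ a = hi $ a" by auto
    have sub: "box_of (N k) \<subseteq> box_of (M' k)"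
      unfolding True using pos by (intro box_mono) (auto simp: vec_upd_def m_def lo_def hi_def)
    have snd_eq: "(snd (N k)) $ a = m" using True by (simp add: vec_upd_def)
    then have "q \<notin> box_of (N k)"
    proof (intro notI)
      assume "q \<in> box_of (N k)"
      then have "q $ a \<le> snd (N k) $ a" by (simp add: box_of_def)
      then show False using q pos snd_eq by (simp add: m_def)
    qed
    moreover have "q \<in> X \<inter> box_of (M' k)" using q Tb assms(6) by auto
    ultimately show ?thesis using sub by blast
  next
    case False
    then have F: "N = M'(k := (vec_upd lo a m, hi))" using Nc by blast
    have "lo $ a \<in> (\<lambda>x. x $ a) ` T" unfolding lo_def assms(3) bbox_def
      using assms(4,5) by simp
    then obtain q where q: "q \<in> T" "q $ a = lo $ a" by auto
    have sub: "box_of (N k) \<subseteq> box_of (M' k)"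
      unfolding F using pos by (intro box_mono) (auto simp: vec_upd_def m_def lo_def hi_def)
    have fst_eq: "(fst (N k)) $ a = m" using F by (simp add: vec_upd_def)
    then have "q \<notin> box_of (N k)"
    proof (intro notI)
      assume "q \<in> box_of (N k)"
      then have "fst (N k) $ a \<le> q $ a" by (simp add: box_of_def)
      then show False using q pos fst_eq by (simp add: m_def)
    qed
    moreover have "q \<in> X \<inter> box_of (M' k)" using q Tb assms(6) by auto
    ultimately show ?thesis using sub by blast
  qed
  have same: "N k' = M' k'" if "k' \<noteq> k" for k' using Nc that by auto
  show ?thesis unfolding mu_def
  proof (rule sum_strict_mono_ex1)
    show "\<forall>x\<in>{..<K}. card (X \<inter> box_of (N x)) \<le> card (X \<inter> box_of (M' x))"
    proof
      fix x assume "x \<in> {..<K}"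
      show "card (X \<inter> box_of (N x)) \<le> card (X \<inter> box_of (M' x))"
      proof (cases "x = k")
        case True
        then show ?thesis using strict assms(7) by (intro card_mono) auto
      next
        case False
        then show ?thesis using same by simp
      qed
    qed
    show "\<exists>x\<in>{..<K}. card (X \<inter> box_of (N x)) < card (X \<inter> box_of (M' x))"
      using strict assms(1,7) by (intro bexI[of _ k]) (auto intro: psubset_card_mono)
  qed simp
qed

lemma bisect_sub: "bisect_children X K M k a \<subseteq> {M(k := (fst (M k), vec_upd (snd (M k)) a ((fst (M k) $ a + snd (M k) $ a) / 2))),
             M(k := (vec_upd (fst (M k)) a ((fst (M k) $ a + snd (M k) $ a) / 2), snd (M k)))}"
  unfolding bisect_children_def Let_def by blast

lemma C_bound:
  fixes C :: "('a::finite) node set"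
  assumes "finite C" "card C \<le> 2" "\<forall>N\<in>C. mu X K N < m"
  shows "phi X K C < 3 ^ m"
proof -
  have "3 * phi X K C = (\<Sum>N\<in>C. 3 * 3 ^ mu X K N)" unfolding phi_def by (simp add: sum_distrib_left)
  also have "\<dots> \<le> (\<Sum>N\<in>C. (3::nat) ^ m)"
  proof (rule sum_mono)
    fix N assume "N \<in> C"
    then have "Suc (mu X K N) \<le> m" using assms(3) by auto
    then have "(3::nat) ^ Suc (mu X K N) \<le> 3 ^ m" by (intro power_increasing) auto
    then show "3 * 3 ^ mu X K N \<le> (3::nat) ^ m" by simp
  qed
  also have "\<dots> = card C * 3 ^ m" by simp
  also have "\<dots> \<le> 2 * 3 ^ m" using assms(2) by simp
  finally have "3 * phi X K C \<le> 2 * 3 ^ m" .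
  moreover have "(0::nat) < 3 ^ m" by simp
  ultimately show ?thesis by linarith
qed

lemma step_dec:
  fixes L :: "('a::finite) node set"
  assumes "bb_step X K \<epsilon> (L, \<alpha>) (L', \<alpha>')" "finite L" "finite X"
  shows "finite L' \<and> phi X K L' < phi X K L"
proof -
  obtain M where M: "M \<in> L" and cases: "(tighten_ok X K M None \<and> \<alpha>' = \<alpha> \<and>
            L' = {N \<in> L - {M}. ereal (lower_bound X K N) < \<alpha>'})
         \<or>
         (\<exists>M' F C. tighten_ok X K M (Some M') \<and>
            finite F \<and> (\<forall>\<mu>\<in>F. kc_feasible X K \<mu> \<and> in_node K M' \<mu>) \<and>
            \<alpha>' = Min (insert \<alpha> ((\<lambda>\<mu>. ereal (kc_obj X K \<mu>)) ` F)) \<and>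
            ((\<exists>k<K. card (X \<inter> box_of (M' k)) > 1) \<longrightarrow>
               (\<exists>k a. k < K \<and> (\<forall>k'<K. \<forall>a'. box_range M' k' a' \<le> box_range M' k a) \<and>
                  C = bisect_children X K M' k a)) \<and>
            (\<not> (\<exists>k<K. card (X \<inter> box_of (M' k)) > 1) \<longrightarrow> C = {}) \<and>
            L' = {N \<in> (L - {M}) \<union> C. ereal (lower_bound X K N) < \<alpha>'})"
    using assms(1) unfolding bb_step_def prod.case by blast
  have split: "phi X K L = 3 ^ mu X K M + phi X K (L - {M})"
    unfolding phi_def using M assms(2) by (simp add: sum.remove)
  from cases show ?thesis
  proof
    assume h: "tighten_ok X K M None \<and> \<alpha>' = \<alpha> \<and>
            L' = {N \<in> L - {M}. ereal (lower_bound X K N) < \<alpha>'}"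
    then have sub: "L' \<subseteq> L - {M}" by auto
    then have fin: "finite L'" using assms(2) finite_subset by blast
    have "phi X K L' \<le> phi X K (L - {M})" unfolding phi_def
      using sub assms(2) by (intro sum_mono2) auto
    moreover have "(0::nat) < 3 ^ mu X K M" by simp
    ultimately show ?thesis using fin split by linarith
  next
    assume "\<exists>M' F C. tighten_ok X K M (Some M') \<and>
            finite F \<and> (\<forall>\<mu>\<in>F. kc_feasible X K \<mu> \<and> in_node K M' \<mu>) \<and>
            \<alpha>' = Min (insert \<alpha> ((\<lambda>\<mu>. ereal (kc_obj X K \<mu>)) ` F)) \<and>
            ((\<exists>k<K. card (X \<inter> box_of (M' k)) > 1) \<longrightarrow>
               (\<exists>k a. k < K \<and> (\<forall>k'<K. \<forall>a'. box_range M' k' a' \<le> box_range M' k a) \<and>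
                  C = bisect_children X K M' k a)) \<and>
            (\<not> (\<exists>k<K. card (X \<inter> box_of (M' k)) > 1) \<longrightarrow> C = {}) \<and>
            L' = {N \<in> (L - {M}) \<union> C. ereal (lower_bound X K N) < \<alpha>'}"
    then obtain M' C where t: "tighten_ok X K M (Some M')"
      and c1: "(\<exists>k<K. card (X \<inter> box_of (M' k)) > 1) \<longrightarrow>
               (\<exists>k a. k < K \<and> (\<forall>k'<K. \<forall>a'. box_range M' k' a' \<le> box_range M' k a) \<and>
                  C = bisect_children X K M' k a)"
      and c2: "\<not> (\<exists>k<K. card (X \<inter> box_of (M' k)) > 1) \<longrightarrow> C = {}"
      and L'eq: "L' = {N \<in> (L - {M}) \<union> C. ereal (lower_bound X K N) < \<alpha>'}"
      by blast
    have mule: "mu X K M' \<le> mu X K M" and T: "\<forall>k<K. \<exists>T. T \<noteq> {} \<and> T \<subseteq> X \<and> M' k = bbox T"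
      using tighten_mu[OF t assms(3)] by auto
    have C: "finite C \<and> card C \<le> 2 \<and> (\<forall>N\<in>C. mu X K N < mu X K M)"
    proof (cases "\<exists>k<K. card (X \<inter> box_of (M' k)) > 1")
      case True
      then obtain k0 where k0: "k0 < K" "card (X \<inter> box_of (M' k0)) > 1" by blast
      obtain a0 where a0: "box_range M' k0 a0 > 0" using range_pos[of X M' k0] k0(2) by blast
      obtain k a where ka: "k < K" "\<forall>k'<K. \<forall>a'. box_range M' k' a' \<le> box_range M' k a"
        "C = bisect_children X K M' k a" using c1 True by blast
      have pos: "box_range M' k a > 0" using ka(2) k0(1) a0 by (meson less_le_trans)
      obtain Tk where Tk: "Tk \<noteq> {}" "Tk \<subseteq> X" "M' k = bbox Tk" using T ka(1) by blast
      have finTk: "finite Tk" using Tk(2) assms(3) finite_subset by blast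
      have "\<forall>N\<in>C. mu X K N < mu X K M'"
        using child_mu[OF ka(1) pos Tk(3) finTk Tk(1) Tk(2) assms(3)] ka(3) by blast
      then have lt: "\<forall>N\<in>C. mu X K N < mu X K M" using mule by (meson less_le_trans)
      define mm where "mm = (fst (M' k) $ a + snd (M' k) $ a) / 2"
      have sub: "C \<subseteq> {M'(k := (fst (M' k), vec_upd (snd (M' k)) a mm)),
             M'(k := (vec_upd (fst (M' k)) a mm, snd (M' k)))}"
        using ka(3) bisect_sub[of X K M' k a] unfolding mm_def by simp
      have finC: "finite C" using finite_subset[OF sub] by simp
      have "card C \<le> card {M'(k := (fst (M' k), vec_upd (snd (M' k)) a mm)),
             M'(k := (vec_upd (fst (M' k)) a mm, snd (M' k)))}" by (rule card_mono[OF _ sub]) simp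
      also have "\<dots> \<le> 2" by (rule card_insert_le_m1) auto
      finally have "card C \<le> 2" .
      then show ?thesis using finC lt by blast
    next
      case False
      then have "C = {}" using c2 by blast
      then show ?thesis by simp
    qed
    have sub: "L' \<subseteq> (L - {M}) \<union> C" using L'eq by auto
    have finU: "finite ((L - {M}) \<union> C)" using C assms(2) by auto
    then have fin: "finite L'" using sub finite_subset by blast
    have "phi X K L' \<le> phi X K ((L - {M}) \<union> C)" unfolding phi_def
      using sub finU by (intro sum_mono2) auto
    also have "\<dots> \<le> phi X K (L - {M}) + phi X K C" unfolding phi_def
      using sum_Un_nat[of "L - {M}" C "\<lambda>N. (3::nat) ^ mu X K N"] C assms(2) by auto
    also have "\<dots> < phi X K (L - {M}) + 3 ^ mu X K M"
      using C_bound[of C X K "mu X K M"] C by linarith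
    finally show ?thesis using fin split by simp
  qed
qed

theorem lemma4:
  fixes X :: "(real^'a) set" and K :: nat and \<epsilon> :: real
  assumes "finite X" and "X \<noteq> {}" and "K \<ge> 1" and "\<epsilon> \<ge> 0"
  shows "\<not> (\<exists>f. f 0 = ({root_node X}, \<infinity>) \<and> (\<forall>i. bb_step X K \<epsilon> (f i) (f (Suc i))))"
proof
  assume "\<exists>f. f 0 = ({root_node X}, \<infinity>) \<and> (\<forall>i. bb_step X K \<epsilon> (f i) (f (Suc i)))"
  then obtain f where f0: "f 0 = ({root_node X}, \<infinity>)" and fs: "\<forall>i. bb_step X K \<epsilon> (f i) (f (Suc i))"
    by blast
  have st: "bb_step X K \<epsilon> (fst (f i), snd (f i)) (fst (f (Suc i)), snd (f (Suc i)))" for i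
    using fs by simp
  have fin: "finite (fst (f i))" for i
  proof (induction i)
    case 0
    then show ?case using f0 by simp
  next
    case (Suc i)
    then show ?case using step_dec[OF st Suc assms(1)] by blast
  qed
  define g where "g i = phi X K (fst (f i))" for i
  have dec: "g (Suc i) < g i" for i
    unfolding g_def using step_dec[OF st fin assms(1)] by blast
  have "g i + i \<le> g 0" for i
  proof (induction i)
    case (Suc i)
    then show ?case using dec[of i] by simp
  qed simp
  from this[of "Suc (g 0)"] show False by simp
qed

end
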